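(* Let $S$ be an inverse semigroup acting on a presheaf of metric spaces $(X,E(S),p)$. For each $s\in S$, the map $\theta_s\colon X\cdot ss^{-1}\to X\cdot s^{-1}s$, $x\mapsto x\cdot s$, is an isometry with respect to the extended metric $d$, where $X\cdot e=\{x\cdot e: x\in X\}$.
   Context: An inverse semigroup is a semigroup $S$ in which every $s$ has a unique $s^{-1}\in S$ with $ss^{-1}s=s$ and $s^{-1}ss^{-1}=s^{-1}$. $E(S)$ is its set of idempotents, which commute and form a meet-semilattice with meet $ef$ (partial order $e\le f$ iff $e=ef$). Presheaf: for a meet-semilattice $E$, a presheaf $(X,E,p)$ is a set $X$ with maps $p\colon X\to E$ and $X\times E\to X$, $(x,e)\mapsto x\cdot e$, such that $(x\cdot e)\cdot f=x\cdot ef$, $x\cdot p(x)=x$, $p(x\cdot e)=p(x)e$. Fibers are $X_e=p^{-1}(e)$. A presheaf of metric spaces is such a presheaf with $p$ surjective, each fiber $X_e$ a metric space with metric $d_e$, and $d_e(x,y)\ge d_{ef}(x\cdot f,y\cdot f)$ for $x,y\in X_e$. The extended metric $d$ on $X$ is $d(x,y)=d_e(x,y)$ if $x,y\in X_e$, and $\infty$ if they lie in different fibers. Action: $S$ acts on $(X,E(S),p)$ if there is a right action $X\times S\to X$ (so $(x\cdot s)\cdot t=x\cdot (st)$) extending the presheaf map $X\times E(S)\to X$, with $p(x\cdot s)=s^{-1}p(x)s$ and $d_e(x,y)\ge d_{s^{-1}es}(x\cdot s,y\cdot s)$ for all $x,y\in X_e$, $s\in S$. *)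

theory Defs
  imports Main "HOL-Library.Extended_Real"
begin

definition inverse_semigroup :: "'a::semigroup_mult itself \<Rightarrow> bool" where
  "inverse_semigroup _ \<longleftrightarrow> (\<forall>s::'a. \<exists>!t. s * t * s = s \<and> t * s * t = t)"

definition sinv :: "'a::semigroup_mult \<Rightarrow> 'a" where
  "sinv s = (THE t. s * t * s = s \<and> t * s * t = t)"

definition idems :: "'a::semigroup_mult set" where
  "idems = {e. e * e = e}"

definition metric_on :: "'x set \<Rightarrow> ('x \<Rightarrow> 'x \<Rightarrow> real) \<Rightarrow> bool" where
  "metric_on A m \<longleftrightarrow>
     (\<forall>x\<in>A. \<forall>y\<in>A. m x y = 0 \<longleftrightarrow> x = y) \<and>
     (\<forall>x\<in>A. \<forall>y\<in>A. m x y = m y x) \<and>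
     (\<forall>x\<in>A. \<forall>y\<in>A. \<forall>z\<in>A. m x z \<le> m x y + m y z)"

definition fiber :: "'x set \<Rightarrow> ('x \<Rightarrow> 'a) \<Rightarrow> 'a \<Rightarrow> 'x set" where
  "fiber X p e = {x\<in>X. p x = e}"

text \<open>Presheaf (X, E(S), p) over the semilattice of idempotents; the restriction
  map is the restriction of act to idempotents. dm e is the metric on the fiber X_e.\<close>
definition presheaf_metric ::
  "'x set \<Rightarrow> ('x \<Rightarrow> 'a::semigroup_mult) \<Rightarrow> ('x \<Rightarrow> 'a \<Rightarrow> 'x) \<Rightarrow> ('a \<Rightarrow> 'x \<Rightarrow> 'x \<Rightarrow> real) \<Rightarrow> bool" where
  "presheaf_metric X p act dm \<longleftrightarrow>
     (\<forall>x\<in>X. p x \<in> idems) \<and>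
     (\<forall>x\<in>X. \<forall>e\<in>idems. act x e \<in> X) \<and>
     (\<forall>x\<in>X. \<forall>e\<in>idems. \<forall>f\<in>idems. act (act x e) f = act x (e * f)) \<and>
     (\<forall>x\<in>X. act x (p x) = x) \<and>
     (\<forall>x\<in>X. \<forall>e\<in>idems. p (act x e) = p x * e) \<and>
     p ` X = idems \<and>
     (\<forall>e\<in>idems. metric_on (fiber X p e) (dm e)) \<and>
     (\<forall>e\<in>idems. \<forall>f\<in>idems. \<forall>x\<in>fiber X p e. \<forall>y\<in>fiber X p e.
        dm (e * f) (act x f) (act y f) \<le> dm e x y)"

definition acts_on ::
  "'x set \<Rightarrow> ('x \<Rightarrow> 'a::semigroup_mult) \<Rightarrow> ('x \<Rightarrow> 'a \<Rightarrow> 'x) \<Rightarrow> ('a \<Rightarrow> 'x \<Rightarrow> 'x \<Rightarrow> real) \<Rightarrow> bool" where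
  "acts_on X p act dm \<longleftrightarrow>
     presheaf_metric X p act dm \<and>
     (\<forall>x\<in>X. \<forall>s. act x s \<in> X) \<and>
     (\<forall>x\<in>X. \<forall>s t. act (act x s) t = act x (s * t)) \<and>
     (\<forall>x\<in>X. \<forall>s. p (act x s) = sinv s * p x * s) \<and>
     (\<forall>e\<in>idems. \<forall>s. \<forall>x\<in>fiber X p e. \<forall>y\<in>fiber X p e.
        dm (sinv s * e * s) (act x s) (act y s) \<le> dm e x y)"

definition ext_dist :: "('x \<Rightarrow> 'a) \<Rightarrow> ('a \<Rightarrow> 'x \<Rightarrow> 'x \<Rightarrow> real) \<Rightarrow> 'x \<Rightarrow> 'x \<Rightarrow> ereal" where
  "ext_dist p dm x y = (if p x = p y then ereal (dm (p x) x y) else \<infinity>)"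

definition restr_set :: "'x set \<Rightarrow> ('x \<Rightarrow> 'a \<Rightarrow> 'x) \<Rightarrow> 'a \<Rightarrow> 'x set" where
  "restr_set X act e = (\<lambda>x. act x e) ` X"

end

theory Submission
  imports Defs
begin

lemma sinv_props:
  assumes "inverse_semigroup TYPE('a::semigroup_mult)"
  shows "(s::'a) * sinv s * s = s \<and> sinv s * s * sinv s = sinv s"
proof -
  have "\<exists>!t. s * t * s = s \<and> t * s * t = t" using assms unfolding inverse_semigroup_def by blast
  then show ?thesis unfolding sinv_def by (rule theI')
qed

theorem lemma1p12:
  fixes X :: "'x set" and p :: "'x \<Rightarrow> 'a::semigroup_mult"
    and act :: "'x \<Rightarrow> 'a \<Rightarrow> 'x" and dm :: "'a \<Rightarrow> 'x \<Rightarrow> 'x \<Rightarrow> real"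
  assumes "inverse_semigroup TYPE('a)"
    and "acts_on X p act dm"
  shows "bij_betw (\<lambda>x. act x s) (restr_set X act (s * sinv s)) (restr_set X act (sinv s * s))
    \<and> (\<forall>x\<in>restr_set X act (s * sinv s). \<forall>y\<in>restr_set X act (s * sinv s).
          ext_dist p dm (act x s) (act y s) = ext_dist p dm x y)"
proof -
  define t where "t = sinv s"
  have st: "s * t * s = s" "t * s * t = t" using sinv_props[OF assms(1)] t_def by auto
  have st2: "s * (t * s) = s" "t * (s * t) = t" using st by (simp_all add: mult.assoc)
  have inX: "\<And>x u. x \<in> X \<Longrightarrow> act x u \<in> X" using assms(2) unfolding acts_on_def by blast
  have comp: "\<And>x u v. x \<in> X \<Longrightarrow> act (act x u) v = act x (u * v)"
    using assms(2) unfolding acts_on_def by blast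
  have pact: "\<And>x u. x \<in> X \<Longrightarrow> p (act x u) = sinv u * p x * u"
    using assms(2) unfolding acts_on_def by blast
  have pid: "\<And>x. x \<in> X \<Longrightarrow> p x \<in> idems"
    using assms(2) unfolding acts_on_def presheaf_metric_def by blast
  have ineq: "\<And>x y u. x \<in> X \<Longrightarrow> y \<in> X \<Longrightarrow> p x = p y \<Longrightarrow>
      dm (sinv u * p x * u) (act x u) (act y u) \<le> dm (p x) x y"
  proof -
    fix x y u assume "x \<in> X" "y \<in> X" "p x = p y"
    then have "x \<in> fiber X p (p x)" "y \<in> fiber X p (p x)" unfolding fiber_def by auto
    then show "dm (sinv u * p x * u) (act x u) (act y u) \<le> dm (p x) x y"
      using assms(2) pid[OF \<open>x \<in> X\<close>] unfolding acts_on_def by blast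
  qed
  let ?A = "restr_set X act (s * t)" and ?B = "restr_set X act (t * s)"
  have bk1: "\<And>x. x \<in> ?A \<Longrightarrow> x \<in> X \<and> act (act x s) t = x"
  proof -
    fix x assume "x \<in> ?A"
    then obtain x0 where x0: "x0 \<in> X" "x = act x0 (s * t)" unfolding restr_set_def by auto
    have "act (act x s) t = act x0 (s * t * s * t)" using x0 inX comp by (simp add: mult.assoc)
    also have "\<dots> = x" using x0 st by simp
    finally show "x \<in> X \<and> act (act x s) t = x" using x0 inX by auto
  qed
  have back2: "\<And>y. y \<in> ?B \<Longrightarrow> act (act y t) s = y"
  proof -
    fix y assume "y \<in> ?B"
    then obtain y0 where y0: "y0 \<in> X" "y = act y0 (t * s)" unfolding restr_set_def by auto
    have "act (act y t) s = act y0 (t * s * t * s)" using y0 inX comp by (simp add: mult.assoc)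
    also have "\<dots> = y" using y0 st by simp
    finally show "act (act y t) s = y" .
  qed
  have AB: "\<And>x. x \<in> ?A \<Longrightarrow> act x s \<in> ?B"
  proof -
    fix x assume "x \<in> ?A"
    then obtain x0 where x0: "x0 \<in> X" "x = act x0 (s * t)" unfolding restr_set_def by auto
    have "act x s = act x0 (s * t * s)" using x0 comp st by (simp add: mult.assoc st2)
    also have "\<dots> = act x0 (s * t * s * t * s)" using st by simp
    also have "\<dots> = act (act x0 s) (t * s)" using x0 comp st by (simp add: mult.assoc st2)
    finally show "act x s \<in> ?B" unfolding restr_set_def using x0 inX by auto
  qed
  have BA: "\<And>y. y \<in> ?B \<Longrightarrow> act y t \<in> ?A"
  proof -
    fix y assume "y \<in> ?B"
    then obtain y0 where y0: "y0 \<in> X" "y = act y0 (t * s)" unfolding restr_set_def by auto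
    have "act y t = act y0 (t * s * t)" using y0 comp st by (simp add: mult.assoc st2)
    also have "\<dots> = act y0 (t * s * t * s * t)" using st by simp
    also have "\<dots> = act (act y0 t) (s * t)" using y0 comp st by (simp add: mult.assoc st2)
    finally show "act y t \<in> ?A" unfolding restr_set_def using y0 inX by auto
  qed
  have bij: "bij_betw (\<lambda>x. act x s) ?A ?B"
    by (rule bij_betw_byWitness[where f' = "\<lambda>y. act y t"]) (use bk1 back2 AB BA in auto)
  have iso: "ext_dist p dm (act x s) (act y s) = ext_dist p dm x y" if "x \<in> ?A" "y \<in> ?A" for x y
  proof -
    have x: "x \<in> X" "act (act x s) t = x" and y: "y \<in> X" "act (act y s) t = y"
      using bk1 that by auto
    show ?thesis
    proof (cases "p x = p y")
      case True
      have e1: "p (act x s) = p (act y s)" using True pact x y t_def by simp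
      have i1: "dm (p (act x s)) (act x s) (act y s) \<le> dm (p x) x y"
        using ineq[OF x(1) y(1) True, of s] pact[OF x(1)] t_def by simp
      have i2: "dm (p x) x y \<le> dm (p (act x s)) (act x s) (act y s)"
      proof -
        have "p (act (act x s) t) = sinv t * p (act x s) * t" using pact[of "act x s" t] inX x(1) by simp
        then have "sinv t * p (act x s) * t = p x" using x(2) by simp
        then show ?thesis using ineq[of "act x s" "act y s" t] e1 inX x y by simp
      qed
      show ?thesis using True e1 i1 i2 unfolding ext_dist_def by simp
    next
      case False
      have "p (act x s) \<noteq> p (act y s)"
      proof
        assume "p (act x s) = p (act y s)"
        then have "p (act (act x s) t) = p (act (act y s) t)"
          using pact[of "act x s" t] pact[of "act y s" t] inX x(1) y(1) by simp
        then show False using x y False by simp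
      qed
      then show ?thesis using False unfolding ext_dist_def by simp
    qed
  qed
  show ?thesis using bij iso t_def by auto
qed

end
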